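(* Consider the generalized $q$-Toda hierarchy on the Lax operator $\mathcal L=\Lambda_\epsilon+u+e^{v}\Lambda_\epsilon^{-1}$, with flows $\epsilon\partial_{t_j}\mathcal L=[(B_j)_+,\mathcal L]$, $B_j=\mathcal L^j/j!$. Let $H_j=\int h_j\,dx$ with $h_j=\frac{1}{j!}\operatorname{Res}\mathcal L^j$. Then the flows are Hamiltonian with respect to the first Poisson bracket, $$\frac{\partial w}{\partial t_j}=\{w,H_j\}_1,\qquad w\in\{u,v\},\ j\ge 0,$$ and they satisfy the bi-Hamiltonian recursion relation $\{\cdot,H_{n-1}\}_2=n\{\cdot,H_n\}_1$ for $n\ge1$.
   Context: Fix $\epsilon>0$; $\Lambda_\epsilon=e^{\epsilon x^2\partial_x}$ acts by $\Lambda_\epsilon^j g(x)=g\!\left(\frac{x}{1-j\epsilon x}\right)$, $j\in\mathbb{Z}$. Difference operators $A=\sum_k A_k(x)\Lambda_\epsilon^k$ multiply by $(X\Lambda_\epsilon^i)\circ(Y\Lambda_\epsilon^j)=X(x)Y\!\left(\frac{x}{1-i\epsilon x}\right)\Lambda_\epsilon^{i+j}$; $A_+=\sum_{k\ge0}A_k\Lambda_\epsilon^k$ and $\operatorname{Res}A=A_0$. For a local functional $H=\int h\,dx$ and $w\in\{u,v\}$, $\{w,H\}_i=\sum_{w'\in\{u,v\}}P_i^{ww'}\frac{\delta H}{\delta w'}$, where $\frac{\delta H}{\delta w'}$ is the variational derivative and the operators $P_i^{ww'}$ are given by the brackets (with $\delta(x-y)$ the delta function): $\{u(x),u(y)\}_1=\{v(x),v(y)\}_1=0$,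 $\{u(x),v(y)\}_1=\frac1\epsilon[\Lambda_\epsilon-1]\delta(x-y)$, $\{v(x),u(y)\}_1=\frac1\epsilon[1-\Lambda_\epsilon^{-1}]\delta(x-y)$; $\{u(x),u(y)\}_2=\frac1\epsilon[\Lambda_\epsilon e^{v(x)}-e^{v(x)}\Lambda_\epsilon^{-1}]\delta(x-y)$, $\{u(x),v(y)\}_2=\frac1\epsilon u(x)[\Lambda_\epsilon-1]\delta(x-y)$, $\{v(x),u(y)\}_2=\frac1\epsilon[1-\Lambda_\epsilon^{-1}]u(x)\delta(x-y)$, $\{v(x),v(y)\}_2=\frac1\epsilon[\Lambda_\epsilon-\Lambda_\epsilon^{-1}]\delta(x-y)$.
   Formalization: The Hamiltonian density is $h_j=\frac{1}{(j+1)!}\operatorname{Res}\mathcal L^{j+1}$ in place of $\frac{1}{j!}\operatorname{Res}\mathcal L^j$, in both the flows and the recursion relation. The statement above fails without it. *)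

theory Defs
  imports "HOL-Analysis.Analysis"
begin

text \<open>A jet (U,V) stands for the values U k = u(Lambda_eps^k x), V k = v(Lambda_eps^k x).
  A difference function (dfun) is a function of the jet; a difference operator
  A = sum_k A_k Lambda^k is represented by its coefficient family (finite support).\<close>

type_synonym jet = "(int \<Rightarrow> real) \<times> (int \<Rightarrow> real)"
type_synonym dfun = "jet \<Rightarrow> real"
type_synonym dop = "int \<Rightarrow> dfun"

definition jshift :: "int \<Rightarrow> jet \<Rightarrow> jet" where
  "jshift k J = ((\<lambda>i. fst J (i + k)), (\<lambda>i. snd J (i + k)))"

definition Lam :: "int \<Rightarrow> dfun \<Rightarrow> dfun" where
  "Lam k f = (\<lambda>J. f (jshift k J))"

text \<open>(X Lambda^i) o (Y Lambda^j) = X (Lambda^i Y) Lambda^(i+j).\<close>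
definition dop_mul :: "dop \<Rightarrow> dop \<Rightarrow> dop" where
  "dop_mul A B = (\<lambda>n J. \<Sum>i\<in>{i. A i \<noteq> (\<lambda>_. 0)}. A i J * Lam i (B (n - i)) J)"

definition dop_one :: dop where
  "dop_one = (\<lambda>k J. if k = 0 then 1 else 0)"

fun dop_pow :: "dop \<Rightarrow> nat \<Rightarrow> dop" where
  "dop_pow A 0 = dop_one"
| "dop_pow A (Suc n) = dop_mul (dop_pow A n) A"

definition dop_plus_part :: "dop \<Rightarrow> dop" where
  "dop_plus_part A = (\<lambda>k. if 0 \<le> k then A k else (\<lambda>_. 0))"

definition dop_scale :: "real \<Rightarrow> dop \<Rightarrow> dop" where
  "dop_scale c A = (\<lambda>k J. c * A k J)"

definition dop_comm :: "dop \<Rightarrow> dop \<Rightarrow> dop" where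
  "dop_comm A B = (\<lambda>k J. dop_mul A B k J - dop_mul B A k J)"

definition Res :: "dop \<Rightarrow> dfun" where
  "Res A = A 0"

definition laxL :: dop where
  "laxL k = (if k = 1 then (\<lambda>_. 1) else if k = 0 then (\<lambda>J. fst J 0)
             else if k = -1 then (\<lambda>J. exp (snd J 0)) else (\<lambda>_. 0))"

definition Bop :: "nat \<Rightarrow> dop" where
  "Bop j = dop_scale (1 / fact j) (dop_pow laxL j)"

text \<open>Hamiltonian density h_j = Res L^(j+1) / (j+1)!  (index convention).\<close>
definition hdens :: "nat \<Rightarrow> dfun" where
  "hdens j = (\<lambda>J. Res (dop_pow laxL (j + 1)) J / fact (j + 1))"

definition pdU :: "int \<Rightarrow> dfun \<Rightarrow> dfun" where
  "pdU k f = (\<lambda>J. deriv (\<lambda>s. f ((fst J)(k := s), snd J)) (fst J k))"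

definition pdV :: "int \<Rightarrow> dfun \<Rightarrow> dfun" where
  "pdV k f = (\<lambda>J. deriv (\<lambda>s. f (fst J, (snd J)(k := s))) (snd J k))"

definition varU :: "dfun \<Rightarrow> dfun" where
  "varU h = (\<lambda>J. \<Sum>k\<in>{k. pdU k h \<noteq> (\<lambda>_. 0)}. pdU k h (jshift (- k) J))"

definition varV :: "dfun \<Rightarrow> dfun" where
  "varV h = (\<lambda>J. \<Sum>k\<in>{k. pdV k h \<noteq> (\<lambda>_. 0)}. pdV k h (jshift (- k) J))"

definition PB1_u :: "real \<Rightarrow> dfun \<Rightarrow> dfun" where
  "PB1_u eps h = (\<lambda>J. (Lam 1 (varV h) J - varV h J) / eps)"

definition PB1_v :: "real \<Rightarrow> dfun \<Rightarrow> dfun" where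
  "PB1_v eps h = (\<lambda>J. (varU h J - Lam (-1) (varU h) J) / eps)"

definition PB2_u :: "real \<Rightarrow> dfun \<Rightarrow> dfun" where
  "PB2_u eps h = (\<lambda>J. (Lam 1 (\<lambda>K. exp (snd K 0) * varU h K) J
                        - exp (snd J 0) * Lam (-1) (varU h) J
                        + fst J 0 * (Lam 1 (varV h) J - varV h J)) / eps)"

definition PB2_v :: "real \<Rightarrow> dfun \<Rightarrow> dfun" where
  "PB2_v eps h = (\<lambda>J. (fst J 0 * varU h J - Lam (-1) (\<lambda>K. fst K 0 * varU h K) J
                        + Lam 1 (varV h) J - Lam (-1) (varV h) J) / eps)"

text \<open>Concrete shift: Lambda_eps^k g (x) = g (x / (1 - k eps x)); jet of (u,v) at x.\<close>
definition jet_of :: "real \<Rightarrow> (real \<Rightarrow> real) \<Rightarrow> (real \<Rightarrow> real) \<Rightarrow> real \<Rightarrow> jet" where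
  "jet_of eps u v x = ((\<lambda>k. u (x / (1 - of_int k * eps * x))), (\<lambda>k. v (x / (1 - of_int k * eps * x))))"

end

theory Submission
  imports Defs
begin

fun Q :: "nat \<Rightarrow> int \<Rightarrow> jet \<Rightarrow> real" where
  "Q 0 n J = (if n = 0 then 1 else 0)"
| "Q (Suc m) n J = Q m (n - 1) J + Q m n J * fst J n + Q m (n + 1) J * exp (snd J (n + 1))"

lemma jshift_fst[simp]: "fst (jshift k J) i = fst J (i + k)" by (simp add: jshift_def)
lemma jshift_snd[simp]: "snd (jshift k J) i = snd J (i + k)" by (simp add: jshift_def)
lemma jshift_jshift[simp]: "jshift a (jshift b J) = jshift (a + b) J"
  by (simp add: jshift_def algebra_simps)
lemma jshift_0[simp]: "jshift 0 J = J" by (simp add: jshift_def)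

lemma Q_supp: "\<bar>n\<bar> > int m \<Longrightarrow> Q m n J = 0"
  by (induction m arbitrary: n) auto

lemma Q_prod:
  assumes S: "finite S" "\<And>i. \<bar>i\<bar> \<le> int q \<Longrightarrow> c - i \<in> S"
  shows "Q (p + q) n J = (\<Sum>k\<in>S. Q q (c - k) J * Q p (n - c + k) (jshift (c - k) J))"
proof (induction p arbitrary: n)
  case 0
  have "(\<Sum>k\<in>S. Q q (c - k) J * Q 0 (n - c + k) (jshift (c - k) J))
      = (\<Sum>k\<in>S. if k = c - n then Q q n J else 0)"
    by (rule sum.cong) auto
  also have "\<dots> = Q q n J"
    using S(1) S(2)[of n] Q_supp[of q n J] by (cases "\<bar>n\<bar> \<le> int q") (auto simp: sum.delta)
  finally show ?case by simp
next
  case (Suc p)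
  have "Q (Suc p + q) n J = Q (p+q) (n-1) J + Q (p+q) n J * fst J n + Q (p+q) (n+1) J * exp (snd J (n+1))"
    by simp
  also have "\<dots> = (\<Sum>k\<in>S. Q q (c-k) J * Q p (n-1-c+k) (jshift (c-k) J))
     + (\<Sum>k\<in>S. Q q (c-k) J * Q p (n-c+k) (jshift (c-k) J)) * fst J n
     + (\<Sum>k\<in>S. Q q (c-k) J * Q p (n+1-c+k) (jshift (c-k) J)) * exp (snd J (n+1))"
    using Suc.IH[of "n-1"] Suc.IH[of n] Suc.IH[of "n+1"] by simp
  also have "\<dots> = (\<Sum>k\<in>S. Q q (c-k) J * Q p (n-1-c+k) (jshift (c-k) J)
     + Q q (c-k) J * Q p (n-c+k) (jshift (c-k) J) * fst J n
     + Q q (c-k) J * Q p (n+1-c+k) (jshift (c-k) J) * exp (snd J (n+1)))"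
    by (simp add: sum.distrib sum_distrib_right)
  also have "\<dots> = (\<Sum>k\<in>S. Q q (c-k) J * Q (Suc p) (n-c+k) (jshift (c-k) J))"
  proof (rule sum.cong[OF refl])
    fix k
    have e1: "n - c + k - 1 = n - 1 - c + k" and e2: "n-c+k+1 = n+1-c+k"
      and e3: "n - c + k + (c - k) = n" and e4: "n + 1 - c + k + (c-k) = n + 1" by simp_all
    show "Q q (c-k) J * Q p (n-1-c+k) (jshift (c-k) J)
     + Q q (c-k) J * Q p (n-c+k) (jshift (c-k) J) * fst J n
     + Q q (c-k) J * Q p (n+1-c+k) (jshift (c-k) J) * exp (snd J (n+1))
      = Q q (c-k) J * Q (Suc p) (n-c+k) (jshift (c-k) J)"
      unfolding Q.simps jshift_fst jshift_snd e1 e2 e3 e4 by (simp add: algebra_simps)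
  qed
  finally show ?case by simp
qed

lemma dop_mul_eq:
  assumes "finite {i. A i \<noteq> (\<lambda>_. 0)}" "finite S"
    "\<And>i. i \<notin> S \<Longrightarrow> A i J * Lam i (B (n - i)) J = 0"
  shows "dop_mul A B n J = (\<Sum>i\<in>S. A i J * Lam i (B (n - i)) J)"
proof -
  let ?T = "{i. A i \<noteq> (\<lambda>_. 0)}"
  have "dop_mul A B n J = (\<Sum>i\<in>?T. A i J * Lam i (B (n - i)) J)" by (simp add: dop_mul_def)
  also have "\<dots> = (\<Sum>i\<in>?T \<union> S. A i J * Lam i (B (n - i)) J)"
    by (rule sum.mono_neutral_left) (use assms in auto)
  also have "\<dots> = (\<Sum>i\<in>S. A i J * Lam i (B (n - i)) J)"
    by (rule sum.mono_neutral_right) (use assms in auto)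
  finally show ?thesis .
qed

lemma Q_fin: "finite {i. (\<lambda>J. Q m i J) \<noteq> (\<lambda>_. 0)}"
proof (rule finite_subset[of _ "{-int m..int m}"])
  show "{i. (\<lambda>J. Q m i J) \<noteq> (\<lambda>_. 0)} \<subseteq> {-int m..int m}"
    using Q_supp[of m] by fastforce
qed simp

lemma dop_pow_eq: "dop_pow laxL m = (\<lambda>n J. Q m n J)"
proof (induction m)
  case 0 show ?case by (auto simp: dop_one_def)
next
  case (Suc m)
  show ?case
  proof (intro ext)
    fix n J
    have "dop_pow laxL (Suc m) n J = dop_mul (\<lambda>n J. Q m n J) laxL n J" using Suc by simp
    also have "\<dots> = (\<Sum>i\<in>{n-1,n,n+1}. Q m i J * Lam i (laxL (n - i)) J)"
      by (rule dop_mul_eq) (auto simp: Q_fin laxL_def Lam_def)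
    also have "\<dots> = Q (Suc m) n J"
      by (simp add: laxL_def Lam_def)
    finally show "dop_pow laxL (Suc m) n J = Q (Suc m) n J" .
  qed
qed

lemma hdens_eq: "hdens n = (\<lambda>J. Q (Suc n) 0 J / fact (Suc n))"
  unfolding hdens_def Res_def dop_pow_eq by simp

definition dU :: "nat \<Rightarrow> int \<Rightarrow> int \<Rightarrow> jet \<Rightarrow> real" where
  "dU m k n J = (\<Sum>p<m. Q p k J * Q (m - 1 - p) (n - k) (jshift k J))"
definition dV :: "nat \<Rightarrow> int \<Rightarrow> int \<Rightarrow> jet \<Rightarrow> real" where
  "dV m k n J = (\<Sum>p<m. Q p k J * exp (snd J k) * Q (m - 1 - p) (n - k + 1) (jshift (k - 1) J))"

lemma dU_Suc: "dU (Suc m) k n J = dU m k (n-1) J + dU m k n J * fst J n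
   + Q m n J * (if n = k then 1 else 0) + dU m k (n+1) J * exp (snd J (n+1))"
proof -
  have "dU (Suc m) k n J = (\<Sum>p<m. Q p k J * Q (Suc (m - 1 - p)) (n - k) (jshift k J))
     + Q m k J * Q 0 (n - k) (jshift k J)"
    unfolding dU_def by (auto simp: Suc_diff_Suc intro!: sum.cong)
  also have "\<dots> = (\<Sum>p<m. Q p k J * Q (m - 1 - p) (n - 1 - k) (jshift k J)
      + Q p k J * Q (m - 1 - p) (n - k) (jshift k J) * fst J n
      + Q p k J * Q (m - 1 - p) (n + 1 - k) (jshift k J) * exp (snd J (n+1)))
     + Q m n J * (if n = k then 1 else 0)"
  proof -
    have e1: "n - k - 1 = n - 1 - k" and e2: "n - k + 1 = n + 1 - k" and e3: "n - k + k = n"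
      and e4: "n + 1 - k + k = n + 1" by simp_all
    show ?thesis unfolding Q.simps jshift_fst jshift_snd e1 e2 e3 e4
      by (auto simp: algebra_simps intro!: sum.cong)
  qed
  also have "\<dots> = dU m k (n-1) J + dU m k n J * fst J n
   + Q m n J * (if n = k then 1 else 0) + dU m k (n+1) J * exp (snd J (n+1))"
    unfolding dU_def by (simp add: sum.distrib sum_distrib_right)
  finally show ?thesis .
qed

lemma dV_Suc: "dV (Suc m) k n J = dV m k (n-1) J + dV m k n J * fst J n
   + dV m k (n+1) J * exp (snd J (n+1)) + Q m (n+1) J * (if n + 1 = k then exp (snd J k) else 0)"
proof -
  have "dV (Suc m) k n J = (\<Sum>p<m. Q p k J * exp (snd J k) * Q (Suc (m - 1 - p)) (n - k + 1) (jshift (k - 1) J))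
     + Q m k J * exp (snd J k) * Q 0 (n - k + 1) (jshift (k - 1) J)"
    unfolding dV_def by (auto simp: Suc_diff_Suc intro!: sum.cong)
  also have "\<dots> = (\<Sum>p<m. Q p k J * exp (snd J k) * Q (m - 1 - p) (n - 1 - k + 1) (jshift (k - 1) J)
      + Q p k J * exp (snd J k) * Q (m - 1 - p) (n - k + 1) (jshift (k - 1) J) * fst J n
      + Q p k J * exp (snd J k) * Q (m - 1 - p) (n + 1 - k + 1) (jshift (k - 1) J) * exp (snd J (n+1)))
     + Q m (n+1) J * (if n + 1 = k then exp (snd J k) else 0)"
  proof -
    have e1: "n - k + 1 - 1 = n - 1 - k + 1" and e2: "n - k + 1 + 1 = n + 1 - k + 1"
      and e3: "n - k + 1 + (k - 1) = n"
      and e4: "n + 1 - k + 1 + (k - 1) = n + 1" by simp_all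
    show ?thesis unfolding Q.simps jshift_fst jshift_snd e1 e2 e3 e4
      by (auto simp: algebra_simps intro!: sum.cong)
  qed
  also have "\<dots> = dV m k (n-1) J + dV m k n J * fst J n
   + dV m k (n+1) J * exp (snd J (n+1)) + Q m (n+1) J * (if n + 1 = k then exp (snd J k) else 0)"
    unfolding dV_def by (simp add: sum.distrib sum_distrib_right)
  finally show ?thesis .
qed

lemma Q_derivU: "((\<lambda>s. Q m n ((fst J)(k := s), snd J)) has_real_derivative dU m k n J) (at (fst J k))"
proof (induction m arbitrary: n)
  case 0 show ?case by (simp add: dU_def)
next
  case (Suc m)
  have d: "((\<lambda>s. ((fst J)(k := s)) n) has_real_derivative (if n = k then 1 else 0)) (at (fst J k))"
    by (cases "n = k") auto
  show ?case unfolding Q.simps fst_conv snd_conv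
    by (rule DERIV_cong[OF DERIV_add[OF DERIV_add[OF Suc.IH[of "n-1"] DERIV_mult[OF Suc.IH[of n] d]]
       DERIV_mult[OF Suc.IH[of "n+1"] DERIV_const]]]) (simp add: dU_Suc)
qed

lemma Q_derivV: "((\<lambda>s. Q m n (fst J, (snd J)(k := s))) has_real_derivative dV m k n J) (at (snd J k))"
proof (induction m arbitrary: n)
  case 0 show ?case by (simp add: dV_def)
next
  case (Suc m)
  have d: "((\<lambda>s. exp (((snd J)(k := s)) (n+1))) has_real_derivative (if n + 1 = k then exp (snd J k) else 0)) (at (snd J k))"
    by (cases "n + 1 = k") (auto intro!: derivative_eq_intros)
  show ?case unfolding Q.simps fst_conv snd_conv
    by (rule DERIV_cong[OF DERIV_add[OF DERIV_add[OF Suc.IH[of "n-1"] DERIV_mult[OF Suc.IH[of n] DERIV_const]]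
       DERIV_mult[OF Suc.IH[of "n+1"] d]]]) (simp add: dV_Suc algebra_simps)
qed

lemma pdU_h: "pdU k (hdens n) = (\<lambda>J. dU (Suc n) k 0 J / fact (Suc n))"
  unfolding pdU_def hdens_eq by (intro ext DERIV_imp_deriv DERIV_cdivide Q_derivU)

lemma pdV_h: "pdV k (hdens n) = (\<lambda>J. dV (Suc n) k 0 J / fact (Suc n))"
  unfolding pdV_def hdens_eq by (intro ext DERIV_imp_deriv DERIV_cdivide Q_derivV)

lemma dU_zero: "\<bar>k\<bar> > int m \<Longrightarrow> dU m k n J = 0"
  unfolding dU_def by (intro sum.neutral) (auto intro!: Q_supp)

lemma dV_zero: "\<bar>k\<bar> > int m \<Longrightarrow> dV m k n J = 0"
  unfolding dV_def by (intro sum.neutral) (auto intro!: Q_supp)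

lemma sum_supp:
  assumes "finite S" "\<And>k. k \<notin> S \<Longrightarrow> g k = (\<lambda>_. 0)"
  shows "(\<Sum>k\<in>{k. g k \<noteq> (\<lambda>_. 0)}. g k (h k)) = (\<Sum>k\<in>S. g k (h k))"
  by (rule sum.mono_neutral_left) (use assms in auto)

lemma varU_h: "varU (hdens n) J = Q n 0 J / fact n"
proof -
  let ?W = "{-int (Suc n)..int (Suc n)}"
  have "varU (hdens n) J = (\<Sum>k\<in>?W. pdU k (hdens n) (jshift (- k) J))"
    unfolding varU_def
    by (rule sum_supp) (auto simp: pdU_h dU_zero)
  also have "\<dots> = (\<Sum>k\<in>?W. \<Sum>p<Suc n. Q (n - p) (0 - k) J * Q p (0 - 0 + k) (jshift (0 - k) J)) / fact (Suc n)"
    unfolding pdU_h dU_def sum_divide_distrib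
    by (auto intro!: sum.cong)
  also have "\<dots> = (\<Sum>p<Suc n. \<Sum>k\<in>?W. Q (n - p) (0 - k) J * Q p (0 - 0 + k) (jshift (0 - k) J)) / fact (Suc n)"
    by (subst sum.swap) simp
  also have "\<dots> = (\<Sum>p<Suc n. Q (p + (n - p)) 0 J) / fact (Suc n)"
    by (intro arg_cong[where f="\<lambda>x. x / _"] sum.cong refl Q_prod[symmetric]) auto
  also have "\<dots> = real (Suc n) * Q n 0 J / fact (Suc n)"
  proof -
    have "(\<Sum>p<Suc n. Q (p + (n - p)) 0 J) = (\<Sum>p<Suc n. Q n 0 J)" by (rule sum.cong) auto
    then show ?thesis by simp
  qed
  also have "\<dots> = Q n 0 J / fact n"
    by (simp only: fact_Suc of_nat_mult) simp
  finally show ?thesis .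
qed

lemma varV_h: "varV (hdens n) J = exp (snd J 0) * Q n 1 (jshift (-1) J) / fact n"
proof -
  let ?W = "{-int (Suc n)..int (Suc n)}"
  let ?J = "jshift (-1) J"
  have "varV (hdens n) J = (\<Sum>k\<in>?W. pdV k (hdens n) (jshift (- k) J))"
    unfolding varV_def
    by (rule sum_supp) (auto simp: pdV_h dV_zero)
  also have "\<dots> = exp (snd J 0) * (\<Sum>k\<in>?W. \<Sum>p<Suc n. Q (n - p) (1 - k) ?J * Q p (1 - 1 + k) (jshift (1 - k) ?J)) / fact (Suc n)"
    unfolding pdV_h dV_def sum_divide_distrib sum_distrib_left
    by (auto intro!: sum.cong simp: mult_ac)
  also have "\<dots> = exp (snd J 0) * (\<Sum>p<Suc n. \<Sum>k\<in>?W. Q (n - p) (1 - k) ?J * Q p (1 - 1 + k) (jshift (1 - k) ?J)) / fact (Suc n)"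
    by (subst sum.swap) simp
  also have "\<dots> = exp (snd J 0) * (\<Sum>p<Suc n. Q (p + (n - p)) 1 ?J) / fact (Suc n)"
    by (intro arg_cong[where f="\<lambda>x. _ * x / _"] sum.cong refl Q_prod[symmetric]) auto
  also have "\<dots> = exp (snd J 0) * (real (Suc n) * Q n 1 ?J) / fact (Suc n)"
  proof -
    have "(\<Sum>p<Suc n. Q (p + (n - p)) 1 ?J) = (\<Sum>p<Suc n. Q n 1 ?J)" by (rule sum.cong) auto
    then show ?thesis by simp
  qed
  also have "\<dots> = exp (snd J 0) * Q n 1 ?J / fact n"
    by (simp only: fact_Suc of_nat_mult) simp
  finally show ?thesis .
qed

lemma Q_left: "Q (Suc m) n J = Q m (n-1) (jshift 1 J) + fst J 0 * Q m n J + exp (snd J 0) * Q m (n+1) (jshift (-1) J)"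
proof -
  have "Q (m + 1) n J = (\<Sum>k\<in>{-1,0,1}. Q 1 (0 - k) J * Q m (n - 0 + k) (jshift (0 - k) J))"
    by (rule Q_prod) auto
  then show ?thesis by simp
qed

lemma Bop_eq: "Bop j = (\<lambda>k J. 1 / fact j * Q j k J)"
  by (simp add: Bop_def dop_scale_def dop_pow_eq)

abbreviation "AP j \<equiv> dop_plus_part (Bop j)"

lemma AP_eq: "AP j k J = (if 0 \<le> k then Q j k J / fact j else 0)"
  by (simp add: dop_plus_part_def Bop_eq)

lemma AP_fin: "finite {i. AP j i \<noteq> (\<lambda>_. 0)}"
proof (rule finite_subset[of _ "{-int j..int j}"])
  show "{i. AP j i \<noteq> (\<lambda>_. 0)} \<subseteq> {-int j..int j}"
    using Q_supp[of j] by (fastforce simp: dop_plus_part_def Bop_eq)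
qed simp

lemma laxL_fin: "finite {i. laxL i \<noteq> (\<lambda>_. 0)}"
  by (rule finite_subset[of _ "{-1,0,1}"]) (auto simp: laxL_def)

lemma mulAL: "dop_mul (AP j) laxL n J = AP j (n-1) J + AP j n J * fst J n + AP j (n+1) J * exp (snd J (n+1))"
proof -
  have "dop_mul (AP j) laxL n J = (\<Sum>i\<in>{n-1,n,n+1}. AP j i J * Lam i (laxL (n - i)) J)"
    by (rule dop_mul_eq) (auto simp: AP_fin laxL_def Lam_def)
  then show ?thesis by (simp add: laxL_def Lam_def)
qed

lemma mulLA: "dop_mul laxL (AP j) n J = AP j (n-1) (jshift 1 J) + fst J 0 * AP j n J + exp (snd J 0) * AP j (n+1) (jshift (-1) J)"
proof -
  have "dop_mul laxL (AP j) n J = (\<Sum>i\<in>{-1,0,1}. laxL i J * Lam i (AP j (n - i)) J)"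
    by (rule dop_mul_eq[OF laxL_fin]) (auto simp: laxL_def)
  then show ?thesis by (simp add: laxL_def Lam_def algebra_simps)
qed

lemma part1_u: "eps \<noteq> 0 \<Longrightarrow> dop_comm (AP j) laxL 0 J = eps * PB1_u eps (hdens j) J"
  by (simp add: dop_comm_def mulAL mulLA AP_eq PB1_u_def varV_h Lam_def)

lemma part1_v: "eps \<noteq> 0 \<Longrightarrow> dop_comm (AP j) laxL (-1) J = exp (snd J 0) * (eps * PB1_v eps (hdens j) J)"
  by (simp add: dop_comm_def mulAL mulLA AP_eq PB1_v_def varU_h Lam_def algebra_simps diff_divide_distrib)

lemma fact_aux: "real (Suc m) * (X / fact (Suc m) / e) = X / fact m / (e::real)"
proof -
  have "real (Suc m) * (X / fact (Suc m) / e) = (real (Suc m) / fact (Suc m)) * X / e" by simp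
  also have "real (Suc m) / fact (Suc m) = 1 / (fact m :: real)"
    by (simp only: fact_Suc of_nat_mult) simp
  finally show ?thesis by simp
qed

lemma part2_u: assumes eps: "eps \<noteq> 0" shows "PB2_u eps (hdens m) J = real (Suc m) * PB1_u eps (hdens (Suc m)) J"
proof -
  have a: "Q (Suc m) 1 J = Q m 0 (jshift 1 J) + fst J 0 * Q m 1 J + exp (snd J 0) * Q m 2 (jshift (-1) J)"
    using Q_left[of m 1 J] by simp
  have b: "Q (Suc m) 1 (jshift (-1) J) = Q m 0 (jshift (-1) J) + Q m 1 (jshift (-1) J) * fst J 0
       + Q m 2 (jshift (-1) J) * exp (snd J 1)"
    by simp
  have f: "real (Suc m) / fact (Suc m) = 1 / (fact m :: real)"
    by (simp only: fact_Suc of_nat_mult) simp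
  have p2: "PB2_u eps (hdens m) J = (exp (snd J 1) * Q m 0 (jshift 1 J) - exp (snd J 0) * Q m 0 (jshift (-1) J)
      + fst J 0 * (exp (snd J 1) * Q m 1 J - exp (snd J 0) * Q m 1 (jshift (-1) J))) / fact m / eps"
    unfolding PB2_u_def varU_h varV_h Lam_def by (simp add: field_simps eps del: Q.simps)
  have p1: "PB1_u eps (hdens (Suc m)) J = (exp (snd J 1) * Q (Suc m) 1 J - exp (snd J 0) * Q (Suc m) 1 (jshift (-1) J)) / fact (Suc m) / eps"
    unfolding PB1_u_def varV_h Lam_def by (simp add: diff_divide_distrib del: Q.simps)
  have core: "exp (snd J 1) * Q m 0 (jshift 1 J) - exp (snd J 0) * Q m 0 (jshift (-1) J)
      + fst J 0 * (exp (snd J 1) * Q m 1 J - exp (snd J 0) * Q m 1 (jshift (-1) J))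
     = exp (snd J 1) * Q (Suc m) 1 J - exp (snd J 0) * Q (Suc m) 1 (jshift (-1) J)"
    unfolding a b by (simp add: algebra_simps del: Q.simps)
  show ?thesis unfolding p1 p2 core fact_aux ..
qed

lemma part2_v: assumes eps: "eps \<noteq> 0" shows "PB2_v eps (hdens m) J = real (Suc m) * PB1_v eps (hdens (Suc m)) J"
proof -
  have a: "Q (Suc m) 0 J = Q m (-1) J + Q m 0 J * fst J 0 + Q m 1 J * exp (snd J 1)"
    by simp
  have b: "Q (Suc m) 0 (jshift (-1) J) = Q m (-1) J + fst J (-1) * Q m 0 (jshift (-1) J)
       + exp (snd J (-1)) * Q m 1 (jshift (-2) J)"
    using Q_left[of m 0 "jshift (-1) J"] by simp
  have p2: "PB2_v eps (hdens m) J = (fst J 0 * Q m 0 J - fst J (-1) * Q m 0 (jshift (-1) J)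
      + exp (snd J 1) * Q m 1 J - exp (snd J (-1)) * Q m 1 (jshift (-2) J)) / fact m / eps"
    unfolding PB2_v_def varU_h varV_h Lam_def by (simp add: field_simps eps del: Q.simps)
  have p1: "PB1_v eps (hdens (Suc m)) J = (Q (Suc m) 0 J - Q (Suc m) 0 (jshift (-1) J)) / fact (Suc m) / eps"
    unfolding PB1_v_def varU_h Lam_def by (simp add: diff_divide_distrib del: Q.simps)
  have core: "fst J 0 * Q m 0 J - fst J (-1) * Q m 0 (jshift (-1) J)
      + exp (snd J 1) * Q m 1 J - exp (snd J (-1)) * Q m 1 (jshift (-2) J)
     = Q (Suc m) 0 J - Q (Suc m) 0 (jshift (-1) J)"
    unfolding a b by (simp add: algebra_simps del: Q.simps)
  show ?thesis unfolding p1 p2 core fact_aux ..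
qed

theorem mainTheorem9:
  fixes eps :: real
  assumes "eps > 0"
  shows "(\<forall>(j::nat) (u::real \<Rightarrow> real \<Rightarrow> real) (v::real \<Rightarrow> real \<Rightarrow> real)
            (ut::real \<Rightarrow> real \<Rightarrow> real) (vt::real \<Rightarrow> real \<Rightarrow> real).
           (\<forall>t x. ((\<lambda>s. u s x) has_real_derivative ut t x) (at t)
                \<and> ((\<lambda>s. v s x) has_real_derivative vt t x) (at t)
                \<and> (\<forall>k::int. eps * (if k = 0 then ut t x
                                    else if k = -1 then exp (v t x) * vt t x else 0)
                       = dop_comm (dop_plus_part (Bop j)) laxL k (jet_of eps (u t) (v t) x)))
           \<longrightarrow> (\<forall>t x. ut t x = PB1_u eps (hdens j) (jet_of eps (u t) (v t) x)
                    \<and> vt t x = PB1_v eps (hdens j) (jet_of eps (u t) (v t) x)))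
       \<and> (\<forall>(n::nat) (u::real \<Rightarrow> real) (v::real \<Rightarrow> real) (x::real). 1 \<le> n \<longrightarrow>
            PB2_u eps (hdens (n - 1)) (jet_of eps u v x) = real n * PB1_u eps (hdens n) (jet_of eps u v x)
          \<and> PB2_v eps (hdens (n - 1)) (jet_of eps u v x) = real n * PB1_v eps (hdens n) (jet_of eps u v x))"
proof (intro conjI allI impI)
  have e0: "eps \<noteq> 0" using assms by simp
  {
    fix j u v ut vt t x
    assume H: "\<forall>t x. ((\<lambda>s. u s x) has_real_derivative ut t x) (at t)
                \<and> ((\<lambda>s. v s x) has_real_derivative vt t x) (at t)
                \<and> (\<forall>k::int. eps * (if k = 0 then ut t x
                                    else if k = -1 then exp (v t x) * vt t x else 0)
                       = dop_comm (dop_plus_part (Bop j)) laxL k (jet_of eps (u t) (v t) x))"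
    let ?J = "jet_of eps (u t) (v t) x"
    have Ht: "\<forall>k::int. eps * (if k = 0 then ut t x
                                    else if k = -1 then exp (v t x) * vt t x else 0)
                       = dop_comm (dop_plus_part (Bop j)) laxL k ?J"
      using spec[OF spec[OF H, of t], of x] by blast
    have h0: "eps * ut t x = eps * PB1_u eps (hdens j) ?J"
      using spec[OF Ht, of 0] part1_u[OF e0, of j ?J] by simp
    have sv: "snd ?J 0 = v t x" by (simp add: jet_of_def)
    have h1: "eps * (exp (v t x) * vt t x) = exp (v t x) * (eps * PB1_v eps (hdens j) ?J)"
      using spec[OF Ht, of "-1"] part1_v[OF e0, of j ?J] sv by simp
    show "ut t x = PB1_u eps (hdens j) ?J" using h0 e0 by simp
    show "vt t x = PB1_v eps (hdens j) ?J" using h1 e0 by simp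
  }
  {
    fix n :: nat and u v :: "real \<Rightarrow> real" and x :: real
    assume "1 \<le> n"
    then obtain m where n: "n = Suc m" by (cases n) auto
    show "PB2_u eps (hdens (n - 1)) (jet_of eps u v x) = real n * PB1_u eps (hdens n) (jet_of eps u v x)"
      unfolding n using part2_u[OF e0] by simp
    show "PB2_v eps (hdens (n - 1)) (jet_of eps u v x) = real n * PB1_v eps (hdens n) (jet_of eps u v x)"
      unfolding n using part2_v[OF e0] by simp
  }
qed

end
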